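(* Let $F$, $H$, $X$, $\Omega$, $Q$ and the sequences generated by the IneIREG method be as described in the context, and suppose $H$ is $\mu$-strongly monotone for some $\mu>0$. Suppose $\eta_k\equiv\eta>0$; $\lambda_k\in[\underline\lambda,\overline\lambda]$ for all $k\ge0$ with $0<\underline\lambda\le\overline\lambda<1/L$, $L:=L_F+\eta L_H$; and $\alpha_0\in[0,1]$ and $\alpha_{k+1}\le(1-\beta_k)\alpha_k$ for all $k\ge0$, where $\beta_k:=\big(\frac{1}{1-\lambda_k^2L^2}+\frac{1}{2\lambda_k\eta\mu}\big)^{-1}$. Define $p_{-1}:=1$, $p_k:=\big(\prod_{i=0}^k(1-\beta_i)\big)^{-1}$ for $k\ge0$, for $k\ge1$ $\Lambda_k:=\sum_{j=0}^{k-1}\lambda_j\eta p_j$ and $\overline y_k:=\Lambda_k^{-1}\sum_{j=0}^{k-1}\lambda_j\eta p_jy_j$, and $\beta:=\big(\frac{1}{1-\overline\lambda^2L^2}+\frac{1}{2\underline\lambda\eta\mu}\big)^{-1}\in(0,1)$. Then for all $k\ge1$, $$0\le\mathrm{Gap}(\overline y_k,F,X)\le\frac{(1-\beta)^k}{2\underline\lambda}\Big(D_X^2+\sum_{j=0}^{k-1}p_{j-1}\delta_j\Big)+\eta\Big(\frac{\overline\lambda C_HD_X}{\underline\lambda}\Big).$$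
   Context: Work in $\mathbb{R}^n$ with Euclidean inner product $\langle\cdot,\cdot\rangle$ and norm $\|\cdot\|$. The maps $F\colon \mathrm{Dom}\,F\to\mathbb{R}^n$ and $H\colon\mathrm{Dom}\,H\to\mathbb{R}^n$ are monotone and Lipschitz continuous with constants $L_F>0$ and $L_H>0$; $H$ is $\mu$-strongly monotone means $\langle H(x)-H(y),x-y\rangle\ge\mu\|x-y\|^2$ for all $x,y\in\mathrm{Dom}\,H$. $X$ is a nonempty compact convex set and $\Omega$ a nonempty closed convex set with $X\subset\Omega\subset\mathrm{Dom}\,F\cap\mathrm{Dom}\,H$; $P_X,P_\Omega$ denote orthogonal projections. $Q:=\{x\in X:\langle F(x),y-x\rangle\ge0\ \forall y\in X\}$ is assumed nonempty. $D_X:=\sup_{x,y\in X}\|x-y\|$, $C_H:=\sup_{x\in X}\|H(x)\|$. $\mathrm{Gap}(z,F,X):=\sup_{x\in X}\langle F(x),z-x\rangle$. IneIREG method: start with $x_0=x_{-1}\in X$; for $k=0,1,\dots$, with parameters $\alpha_k\ge0$, $\lambda_k>0$, $\eta_k>0$, set $w_k=x_k+\alpha_k(x_k-x_{k-1})$, $w'_k=P_\Omega(w_k)$, $y_k=P_X\big(w_k-\lambda_k(F(w'_k)+\eta_kH(w'_k))\big)$, $x_{k+1}=P_X\big(w_k-\lambda_k(F(y_k)+\eta_kH(y_k))\big)$. Also $\delta_k:=\alpha_k(1+\alpha_k)\|x_k-x_{k-1}\|^2$ for $k\ge0$. *)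

theory Defs
  imports "HOL-Analysis.Analysis"
begin

definition monotone_op :: "('a::real_inner \<Rightarrow> 'a) \<Rightarrow> 'a set \<Rightarrow> bool" where
  "monotone_op F D \<longleftrightarrow> (\<forall>x\<in>D. \<forall>y\<in>D. inner (F x - F y) (x - y) \<ge> 0)"

definition strongly_monotone_op :: "real \<Rightarrow> ('a::real_inner \<Rightarrow> 'a) \<Rightarrow> 'a set \<Rightarrow> bool" where
  "strongly_monotone_op \<mu> F D \<longleftrightarrow>
     (\<forall>x\<in>D. \<forall>y\<in>D. inner (F x - F y) (x - y) \<ge> \<mu> * (norm (x - y))\<^sup>2)"

definition VI_sol :: "('a::real_inner \<Rightarrow> 'a) \<Rightarrow> 'a set \<Rightarrow> 'a set" where
  "VI_sol F X = {x\<in>X. \<forall>y\<in>X. inner (F x) (y - x) \<ge> 0}"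

definition Gap :: "'a::real_inner \<Rightarrow> ('a \<Rightarrow> 'a) \<Rightarrow> 'a set \<Rightarrow> real" where
  "Gap z F X = (SUP x\<in>X. inner (F x) (z - x))"

definition prev_it :: "(nat \<Rightarrow> 'a) \<Rightarrow> nat \<Rightarrow> 'a" where
  "prev_it x k = (if k = 0 then x 0 else x (k - 1))"

end

theory Submission
  imports Defs
begin


lemma eg_core:
  fixes w x y u g1 g2 :: "'a::real_inner"
  assumes p1: "inner (w - lam *\<^sub>R g1 - y) (u - y) \<le> 0"
    and p2: "inner (w - lam *\<^sub>R g2 - u) (x - u) \<le> 0"
    and lip: "norm (g1 - g2) \<le> L * norm (w - y)" and lam: "lam \<ge> 0" and L: "L \<ge> 0"
  shows "(norm (u - x))\<^sup>2 \<le> (norm (w - x))\<^sup>2 - (1 - lam\<^sup>2 * L\<^sup>2) * (norm (w - y))\<^sup>2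
           + 2 * lam * inner g2 (x - y)"
proof -
  define a b c where "a = w - y" and "b = y - u" and "c = u - x"
  have wx: "w - x = a + b + c" and xy: "x - y = - b - c" and uy: "u - y = - b"
    and xu: "x - u = - c" by (auto simp: a_def b_def c_def)
  have "w - lam *\<^sub>R g1 - y = a - lam *\<^sub>R g1" by (simp add: a_def)
  hence h1: "inner a b \<ge> lam * inner g1 b"
    using p1 unfolding uy \<open>w - lam *\<^sub>R g1 - y = a - lam *\<^sub>R g1\<close> by (simp add: inner_diff_left inner_minus_right)
  have "w - lam *\<^sub>R g2 - u = a + b - lam *\<^sub>R g2" by (simp add: a_def b_def)
  hence h2: "inner a c + inner b c \<ge> lam * inner g2 c"
    using p2 unfolding xu \<open>w - lam *\<^sub>R g2 - u = a + b - lam *\<^sub>R g2\<close> by (simp add: inner_diff_left inner_add_left inner_minus_right)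
  have "\<bar>inner (g1 - g2) b\<bar> \<le> norm (g1 - g2) * norm b" by (rule Cauchy_Schwarz_ineq2)
  also have "\<dots> \<le> L * norm a * norm b" using lip a_def by (simp add: mult_right_mono)
  finally have h3: "inner g1 b - inner g2 b \<ge> - (L * norm a * norm b)"
    by (simp add: inner_diff_left)
  have h3': "lam * (inner g1 b - inner g2 b) \<ge> lam * (- (L * norm a * norm b))"
    using h3 lam by (rule mult_left_mono)
  have eq: "(norm (w - x))\<^sup>2 = (norm a)\<^sup>2 + (norm b)\<^sup>2 + (norm c)\<^sup>2 + 2 * inner a b + 2 * inner a c + 2 * inner b c"
    unfolding wx by (simp add: power2_norm_eq_inner inner_add_left inner_add_right inner_commute)
  have sq: "0 \<le> (norm b - lam * L * norm a)\<^sup>2" by simp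
  have g2: "inner g2 (x - y) = - inner g2 b - inner g2 c" unfolding xy by (simp add: inner_diff_right)
  show ?thesis
    unfolding eq g2 a_def[symmetric] c_def[symmetric]
    using h1 h2 h3' sq by (simp add: power2_eq_square algebra_simps)
qed



lemma combine_sq:
  fixes p q :: "'a::real_normed_vector"
  assumes a: "a > 0" and b: "b > 0"
  shows "inverse (1 / a + 1 / b) * (norm (p + q))\<^sup>2 \<le> a * (norm p)\<^sup>2 + b * (norm q)\<^sup>2"
proof -
  have e: "inverse (1 / a + 1 / b) = a * b / (a + b)" using a b by (simp add: field_simps)
  have t: "norm (p + q) \<le> norm p + norm q" by (rule norm_triangle_ineq)
  have "(norm (p + q))\<^sup>2 \<le> (norm p + norm q)\<^sup>2" using t by (simp add: power_mono)
  hence "a * b * (norm (p + q))\<^sup>2 \<le> a * b * (norm p + norm q)\<^sup>2" using a b by simp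
  also have "\<dots> \<le> (a + b) * (a * (norm p)\<^sup>2 + b * (norm q)\<^sup>2)"
  proof -
    have "0 \<le> (a * norm p - b * norm q)\<^sup>2" by simp
    thus ?thesis by (simp add: power2_eq_square algebra_simps)
  qed
  finally have "a * b * (norm (p + q))\<^sup>2 \<le> (a + b) * (a * (norm p)\<^sup>2 + b * (norm q)\<^sup>2)" .
  thus ?thesis unfolding e using a b by (simp add: field_simps)
qed

lemma inertial_id:
  fixes x z v :: "'a::real_inner"
  shows "(norm (x + al *\<^sub>R (x - z) - v))\<^sup>2 =
     (1 + al) * (norm (x - v))\<^sup>2 - al * (norm (z - v))\<^sup>2 + al * (1 + al) * (norm (x - z))\<^sup>2"
proof -
  have "x + al *\<^sub>R (x - z) - v = (1 + al) *\<^sub>R (x - v) - al *\<^sub>R (z - v)"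
    by (simp add: algebra_simps)
  moreover have "x - z = (x - v) - (z - v)" by simp
  moreover {
    fix A B :: 'a
    have "(norm ((1 + al) *\<^sub>R A - al *\<^sub>R B))\<^sup>2 =
      (1 + al) * (norm A)\<^sup>2 - al * (norm B)\<^sup>2 + al * (1 + al) * (norm (A - B))\<^sup>2"
      unfolding power2_norm_eq_inner
      by (simp add: inner_diff_left inner_diff_right inner_commute[of B A] algebra_simps power2_eq_square)
  }
  ultimately show ?thesis by metis
qed



lemma tele:
  fixes phi phim pm al dl r c :: "nat \<Rightarrow> real" and D2 :: real
  assumes step: "\<And>k. phi (Suc k) \<le> c k * ((1 + al k) * phi k - al k * phim k + dl k) + r k"
    and pmc: "\<And>k. pm (Suc k) * c k = pm k"
    and pmpos: "\<And>k. pm k > 0"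
    and phim_suc: "\<And>k. phim (Suc k) = phi k" and phim0: "phim 0 = phi 0" and pm0: "pm 0 = 1"
    and phib: "\<And>k. 0 \<le> phi k \<and> phi k \<le> D2"
    and al0: "al 0 \<le> 1" and alnn: "\<And>k. al k \<ge> 0"
    and aldec: "\<And>k. pm (Suc k) * al (Suc k) \<le> pm k * al k"
  shows "0 \<le> D2 + (\<Sum>j<K. pm j * dl j + pm (Suc j) * r j)"
proof -
  define S where "S K = (\<Sum>j<K. pm j * dl j + pm (Suc j) * r j)" for K
  have phimb: "0 \<le> phim k \<and> phim k \<le> D2" for k
    by (cases k) (use phib phim0 phim_suc in auto)
  have inv: "pm K * (phi K - al K * phim K) \<le> D2 * (1 - pm K * al K) + S K" for K
  proof (induction K)
    case 0
    have "(1 - al 0) * phi 0 \<le> (1 - al 0) * D2" using al0 phib[of 0] by (intro mult_left_mono) auto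
    then show ?case by (simp add: pm0 phim0 S_def algebra_simps)
  next
    case (Suc K)
    have "pm (Suc K) * phi (Suc K) \<le> pm (Suc K) * (c K * ((1 + al K) * phi K - al K * phim K + dl K) + r K)"
      using step[of K] pmpos[of "Suc K"] by (intro mult_left_mono) auto
    also have "\<dots> = pm K * ((1 + al K) * phi K - al K * phim K + dl K) + pm (Suc K) * r K"
      by (simp add: distrib_left mult.assoc[symmetric] pmc)
    finally have A: "pm (Suc K) * phi (Suc K) \<le> pm K * ((1 + al K) * phi K - al K * phim K + dl K) + pm (Suc K) * r K" .
    have B: "(pm K * al K - pm (Suc K) * al (Suc K)) * phi K \<le> (pm K * al K - pm (Suc K) * al (Suc K)) * D2"
      using aldec[of K] phib[of K] by (intro mult_left_mono) auto
    have SS: "S (Suc K) = S K + pm K * dl K + pm (Suc K) * r K" by (simp add: S_def)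
    show ?case unfolding phim_suc SS using A B Suc.IH by (simp add: algebra_simps)
  qed
  have "pm K * al K * (D2 - phim K) \<ge> 0" using pmpos[of K] alnn[of K] phimb[of K] by simp
  moreover have "pm K * phi K \<ge> 0" using pmpos[of K] phib[of K] by simp
  ultimately show ?thesis using inv[of K] unfolding S_def[symmetric] by (simp add: algebra_simps)
qed

theorem proposition4p17:
  fixes F H :: "'a::euclidean_space \<Rightarrow> 'a"
    and DomF DomH X \<Omega> :: "'a set"
    and LF LH \<mu> \<eta> lam_lo lam_hi :: real
    and lam alpha :: "nat \<Rightarrow> real"
    and x w w' y :: "nat \<Rightarrow> 'a"
  assumes monF: "monotone_op F DomF" and monH: "monotone_op H DomH"
    and lipF: "lipschitz_on LF DomF F" and LF_pos: "LF > 0"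
    and lipH: "lipschitz_on LH DomH H" and LH_pos: "LH > 0"
    and mu_pos: "\<mu> > 0" and strH: "strongly_monotone_op \<mu> H DomH"
    and X_ne: "X \<noteq> {}" and X_compact: "compact X" and X_convex: "convex X"
    and Om_ne: "\<Omega> \<noteq> {}" and Om_closed: "closed \<Omega>" and Om_convex: "convex \<Omega>"
    and X_sub: "X \<subseteq> \<Omega>" and Om_sub: "\<Omega> \<subseteq> DomF \<inter> DomH"
    and Q_ne: "VI_sol F X \<noteq> {}"
    and eta_pos: "\<eta> > 0"
    and lam_bounds: "\<And>k. lam_lo \<le> lam k \<and> lam k \<le> lam_hi"
    and lam_lo_pos: "0 < lam_lo" and lam_lo_hi: "lam_lo \<le> lam_hi"
    and lam_hi_lt: "lam_hi < 1 / (LF + \<eta> * LH)"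
    and alpha_nonneg: "\<And>k. alpha k \<ge> 0"
    and alpha0: "alpha 0 \<le> 1"
    and alpha_dec: "\<And>k. alpha (Suc k) \<le>
          (1 - inverse (1 / (1 - (lam k)\<^sup>2 * (LF + \<eta> * LH)\<^sup>2) + 1 / (2 * lam k * \<eta> * \<mu>))) * alpha k"
    and x0: "x 0 \<in> X"
    and w_def: "\<And>k. w k = x k + alpha k *\<^sub>R (x k - prev_it x k)"
    and w'_def: "\<And>k. w' k = closest_point \<Omega> (w k)"
    and y_def: "\<And>k. y k = closest_point X (w k - lam k *\<^sub>R (F (w' k) + \<eta> *\<^sub>R H (w' k)))"
    and x_def: "\<And>k. x (Suc k) = closest_point X (w k - lam k *\<^sub>R (F (y k) + \<eta> *\<^sub>R H (y k)))"
  shows "\<And>k. k \<ge> 1 \<Longrightarrow>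
    (let L = LF + \<eta> * LH;
         bet = (\<lambda>i. inverse (1 / (1 - (lam i)\<^sup>2 * L\<^sup>2) + 1 / (2 * lam i * \<eta> * \<mu>)));
         pm = (\<lambda>j. inverse (\<Prod>i<j. (1 - bet i)));
         p = (\<lambda>j. pm (Suc j));
         \<delta> = (\<lambda>j. alpha j * (1 + alpha j) * (norm (x j - prev_it x j))\<^sup>2);
         Lam = (\<Sum>j<k. lam j * \<eta> * p j);
         ybar = inverse Lam *\<^sub>R (\<Sum>j<k. (lam j * \<eta> * p j) *\<^sub>R y j);
         betc = inverse (1 / (1 - lam_hi\<^sup>2 * L\<^sup>2) + 1 / (2 * lam_lo * \<eta> * \<mu>));
         DX = diameter X;
         CH = (SUP z\<in>X. norm (H z))
     in 0 \<le> Gap ybar F X \<and>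
        Gap ybar F X \<le> (1 - betc) ^ k / (2 * lam_lo) * (DX\<^sup>2 + (\<Sum>j<k. pm j * \<delta> j))
                         + \<eta> * (lam_hi * CH * DX / lam_lo))"
proof -
  fix k :: nat assume k1: "1 \<le> k"
  define L where "L = LF + \<eta> * LH"
  define bet where "bet = (\<lambda>i. inverse (1 / (1 - (lam i)\<^sup>2 * L\<^sup>2) + 1 / (2 * lam i * \<eta> * \<mu>)))"
  define pm where "pm = (\<lambda>j. inverse (\<Prod>i<j. (1 - bet i)))"
  define p where "p = (\<lambda>j. pm (Suc j))"
  define dl where "dl = (\<lambda>j. alpha j * (1 + alpha j) * (norm (x j - prev_it x j))\<^sup>2)"
  define Lam where "Lam = (\<Sum>j<k. lam j * \<eta> * p j)"
  define ybar where "ybar = inverse Lam *\<^sub>R (\<Sum>j<k. (lam j * \<eta> * p j) *\<^sub>R y j)"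
  define betc where "betc = inverse (1 / (1 - lam_hi\<^sup>2 * L\<^sup>2) + 1 / (2 * lam_lo * \<eta> * \<mu>))"
  define DX where "DX = diameter X"
  define CH where "CH = (SUP z\<in>X. norm (H z))"
  define G where "G = (\<lambda>z. F z + \<eta> *\<^sub>R H z)"
  have L_pos: "L > 0" using LF_pos LH_pos eta_pos by (simp add: L_def add_pos_pos)
  have X_closed: "closed X" and X_bdd: "bounded X"
    using X_compact by (auto intro: compact_imp_closed compact_imp_bounded)
  have distX: "norm (a - b) \<le> DX" if "a \<in> X" "b \<in> X" for a b
    using diameter_bounded_bound[OF X_bdd that] by (simp add: DX_def dist_norm)
  have DX_nn: "0 \<le> DX" using distX[OF x0 x0] by simp
  have xX: "x j \<in> X" for j
    by (cases j) (auto simp: x_def x0 intro!: closest_point_in_set[OF X_closed X_ne])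
  have prevX: "prev_it x j \<in> X" for j using xX by (simp add: prev_it_def)
  have yX: "y j \<in> X" for j by (simp add: y_def closest_point_in_set[OF X_closed X_ne])
  have w'Om: "w' j \<in> \<Omega>" for j by (simp add: w'_def closest_point_in_set[OF Om_closed Om_ne])
  have Hb: "norm (H z) \<le> norm (H (x 0)) + LH * DX" if "z \<in> X" for z
  proof -
    have "dist (H z) (H (x 0)) \<le> LH * dist z (x 0)"
      using lipschitz_onD[OF lipH] that x0 X_sub Om_sub by blast
    also have "\<dots> \<le> LH * DX" using distX[OF that x0] LH_pos by (simp add: dist_norm)
    finally show ?thesis using norm_triangle_ineq2[of "H z" "H (x 0)"] by (simp add: dist_norm)
  qed
  have CH_bdd: "bdd_above ((\<lambda>z. norm (H z)) ` X)" using Hb by (rule bdd_aboveI2)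
  have CH_ge: "norm (H z) \<le> CH" if "z \<in> X" for z
    unfolding CH_def by (rule cSUP_upper[OF that CH_bdd])
  have CH_nn: "0 \<le> CH" using CH_ge[OF x0] norm_ge_zero order_trans by blast
  have G_lip: "norm (G a - G b) \<le> L * norm (a - b)" if "a \<in> \<Omega>" "b \<in> \<Omega>" for a b
  proof -
    have "dist (F a) (F b) \<le> LF * dist a b" using lipschitz_onD[OF lipF] that Om_sub by blast
    moreover have "dist (H a) (H b) \<le> LH * dist a b" using lipschitz_onD[OF lipH] that Om_sub by blast
    moreover have "G a - G b = (F a - F b) + \<eta> *\<^sub>R (H a - H b)" by (simp add: G_def algebra_simps)
    ultimately have "norm (G a - G b) \<le> norm (F a - F b) + \<eta> * norm (H a - H b)"
      using norm_triangle_ineq[of "F a - F b" "\<eta> *\<^sub>R (H a - H b)"] eta_pos by simp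
    also have "\<dots> \<le> LF * norm (a - b) + \<eta> * (LH * norm (a - b))"
      using \<open>dist (F a) (F b) \<le> LF * dist a b\<close> \<open>dist (H a) (H b) \<le> LH * dist a b\<close> eta_pos
      by (intro add_mono mult_left_mono) (auto simp: dist_norm)
    also have "\<dots> = L * norm (a - b)" by (simp add: L_def algebra_simps)
    finally show ?thesis .
  qed
  have lamL: "lam j * L < 1" and lam_pos: "lam j > 0" for j
  proof -
    have "lam j * L \<le> lam_hi * L" using lam_bounds[of j] L_pos by simp
    also have "\<dots> < 1" using lam_hi_lt L_pos by (simp add: L_def field_simps)
    finally show "lam j * L < 1" .
    show "lam j > 0" using lam_bounds[of j] lam_lo_pos by linarith
  qed
  have lamhiL: "lam_hi * L < 1" using lam_hi_lt L_pos by (simp add: L_def field_simps)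
  have sq_lt: "t\<^sup>2 * L\<^sup>2 < 1" if "0 \<le> t" "t * L < 1" for t
  proof -
    have "(t * L)\<^sup>2 < 1\<^sup>2" using that L_pos by (intro power_strict_mono) auto
    thus ?thesis by (simp add: power_mult_distrib)
  qed
  have a_pos: "1 - (lam j)\<^sup>2 * L\<^sup>2 > 0" for j using sq_lt[of "lam j"] lamL[of j] lam_pos[of j] by simp
  have ahi_pos: "1 - lam_hi\<^sup>2 * L\<^sup>2 > 0" using sq_lt[of lam_hi] lamhiL lam_lo_pos lam_lo_hi by simp
  have b_pos: "2 * lam j * \<eta> * \<mu> > 0" for j using lam_pos[of j] eta_pos mu_pos by simp
  have bet_bounds: "0 < bet j \<and> bet j < 1 \<and> betc \<le> bet j" for j
  proof -
    define a where "a = 1 / (1 - (lam j)\<^sup>2 * L\<^sup>2)"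
    define b where "b = 1 / (2 * lam j * \<eta> * \<mu>)"
    define ah where "ah = 1 / (1 - lam_hi\<^sup>2 * L\<^sup>2)"
    define bl where "bl = 1 / (2 * lam_lo * \<eta> * \<mu>)"
    have a1: "a \<ge> 1" unfolding a_def using a_pos[of j] by (simp add: field_simps)
    have bp: "b > 0" unfolding b_def using b_pos[of j] by simp
    have "(lam j)\<^sup>2 \<le> lam_hi\<^sup>2" using lam_bounds[of j] lam_pos[of j] by (intro power_mono) auto
    hence "(lam j)\<^sup>2 * L\<^sup>2 \<le> lam_hi\<^sup>2 * L\<^sup>2" by (simp add: mult_right_mono)
    hence aah: "a \<le> ah" unfolding a_def ah_def using a_pos[of j] ahi_pos
      by (intro divide_left_mono) auto
    have "2 * lam_lo * \<eta> * \<mu> \<le> 2 * lam j * \<eta> * \<mu>" using lam_bounds[of j] eta_pos mu_pos by simp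
    hence bbl: "b \<le> bl" unfolding b_def bl_def using lam_lo_pos eta_pos mu_pos
      by (intro divide_left_mono) auto
    have "bet j = inverse (a + b)" by (simp add: bet_def a_def b_def)
    moreover have "betc = inverse (ah + bl)" by (simp add: betc_def ah_def bl_def)
    moreover have "1 < a + b" "a + b \<le> ah + bl" using a1 bp aah bbl by auto
    moreover have "inverse (ah + bl) \<le> inverse (a + b)"
      using \<open>1 < a + b\<close> \<open>a + b \<le> ah + bl\<close> by (intro le_imp_inverse_le) auto
    moreover have "inverse (a + b) < 1" using \<open>1 < a + b\<close> by (simp add: inverse_less_1_iff)
    ultimately show ?thesis using \<open>1 < a + b\<close> by auto
  qed
  have betc_pos: "0 < betc" unfolding betc_def using ahi_pos lam_lo_pos eta_pos mu_pos
    by (intro positive_imp_inverse_positive add_pos_pos) auto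
  have prod_pos: "0 < (\<Prod>i<j. (1 - bet i))" for j using bet_bounds by (intro prod_pos) auto
  have pm_pos: "0 < pm j" for j unfolding pm_def using prod_pos[of j] by simp
  have pmc: "pm (Suc j) * (1 - bet j) = pm j" for j
  proof -
    have "1 - bet j \<noteq> 0" "(\<Prod>i<j. (1 - bet i)) \<noteq> 0" using bet_bounds[of j] prod_pos[of j] by linarith+
    thus ?thesis unfolding pm_def by (simp add: lessThan_Suc mult.commute[of _ "1 - bet j"])
  qed
  have onestep: "(norm (x (Suc j) - v))\<^sup>2 \<le> (1 - bet j) * (norm (w j - v))\<^sup>2
      - 2 * lam j * inner (F v) (y j - v) + 2 * lam j * \<eta> * CH * DX" if vX: "v \<in> X" for v j
  proof -
    let ?a = "w j - lam j *\<^sub>R G (w' j)"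
    let ?b = "w j - lam j *\<^sub>R G (y j)"
    have ycp: "y j = closest_point X ?a" by (simp add: y_def G_def)
    have xcp: "x (Suc j) = closest_point X ?b" by (simp add: x_def G_def)
    have p1: "inner (?a - y j) (x (Suc j) - y j) \<le> 0"
      unfolding ycp by (rule any_closest_point_dot[OF X_convex X_closed])
        (auto simp: xX closest_point_in_set[OF X_closed X_ne] closest_point_le[OF X_closed])
    have p2: "inner (?b - x (Suc j)) (v - x (Suc j)) \<le> 0"
      unfolding xcp by (rule any_closest_point_dot[OF X_convex X_closed])
        (auto simp: vX closest_point_in_set[OF X_closed X_ne] closest_point_le[OF X_closed])
    have yOm: "y j \<in> \<Omega>" using yX X_sub by auto
    have "norm (y j - w' j) \<le> norm (y j - w j)"
    proof -
      have "dist (closest_point \<Omega> (y j)) (closest_point \<Omega> (w j)) \<le> dist (y j) (w j)"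
        by (rule closest_point_lipschitz[OF Om_convex Om_closed Om_ne])
      thus ?thesis by (simp add: closest_point_self[OF yOm] w'_def dist_norm)
    qed
    hence lipg: "norm (G (w' j) - G (y j)) \<le> L * norm (w j - y j)"
      using G_lip[OF w'Om yOm] L_pos
      by (smt (verit, best) mult_left_mono norm_minus_commute)
    have E1: "(norm (x (Suc j) - v))\<^sup>2 \<le> (norm (w j - v))\<^sup>2 - (1 - (lam j)\<^sup>2 * L\<^sup>2) * (norm (w j - y j))\<^sup>2
           + 2 * lam j * inner (G (y j)) (v - y j)"
      by (rule eg_core[OF p1 p2 lipg]) (use lam_pos[of j] L_pos in auto)
    have vD: "v \<in> DomF" "v \<in> DomH" "y j \<in> DomF" "y j \<in> DomH" using vX yX X_sub Om_sub by auto
    have mF: "inner (F v - F (y j)) (v - y j) \<ge> 0" using monF vD unfolding monotone_op_def by blast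
    have sH: "inner (H v - H (y j)) (v - y j) \<ge> \<mu> * (norm (v - y j))\<^sup>2"
      using strH vD unfolding strongly_monotone_op_def by blast
    have Hv: "inner (H v) (v - y j) \<le> CH * DX"
    proof -
      have "inner (H v) (v - y j) \<le> norm (H v) * norm (v - y j)" by (rule norm_cauchy_schwarz)
      also have "\<dots> \<le> CH * DX" using CH_ge[OF vX] distX[OF vX yX] CH_nn
        by (intro mult_mono) auto
      finally show ?thesis .
    qed
    have Gin: "inner (G (y j)) (v - y j) \<le> - inner (F v) (y j - v) + \<eta> * CH * DX - \<eta> * \<mu> * (norm (y j - v))\<^sup>2"
    proof -
      have "inner (G (y j)) (v - y j) = inner (F (y j)) (v - y j) + \<eta> * inner (H (y j)) (v - y j)"
        by (simp add: G_def inner_add_left)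
      moreover have "inner (F (y j)) (v - y j) \<le> - inner (F v) (y j - v)"
        using mF by (simp add: inner_diff_left inner_diff_right)
      moreover have "inner (H (y j)) (v - y j) \<le> CH * DX - \<mu> * (norm (y j - v))\<^sup>2"
        using sH Hv by (simp add: inner_diff_left norm_minus_commute)
      ultimately show ?thesis using eta_pos
        by (smt (verit, best) mult_left_mono right_diff_distrib mult.assoc)
    qed
    have comb: "bet j * (norm (w j - v))\<^sup>2 \<le> (1 - (lam j)\<^sup>2 * L\<^sup>2) * (norm (w j - y j))\<^sup>2
        + (2 * lam j * \<eta> * \<mu>) * (norm (y j - v))\<^sup>2"
      using combine_sq[OF a_pos[of j] b_pos[of j], of "w j - y j" "y j - v"]
      by (simp add: bet_def)
    have "2 * lam j * inner (G (y j)) (v - y j) \<le> 2 * lam j * (- inner (F v) (y j - v) + \<eta> * CH * DX - \<eta> * \<mu> * (norm (y j - v))\<^sup>2)"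
      using Gin lam_pos[of j] by simp
    thus ?thesis using E1 comb by (simp add: algebra_simps)
  qed
  have tel: "0 \<le> DX\<^sup>2 + (\<Sum>j<k. pm j * dl j + pm (Suc j) * (- 2 * lam j * inner (F v) (y j - v) + 2 * lam j * \<eta> * CH * DX))"
    if vX: "v \<in> X" for v
  proof (rule tele[where phi = "\<lambda>j. (norm (x j - v))\<^sup>2" and phim = "\<lambda>j. (norm (prev_it x j - v))\<^sup>2"
        and c = "\<lambda>j. 1 - bet j" and al = alpha])
    fix j
    show "(norm (x (Suc j) - v))\<^sup>2 \<le> (1 - bet j) * ((1 + alpha j) * (norm (x j - v))\<^sup>2 - alpha j * (norm (prev_it x j - v))\<^sup>2 + dl j)
       + (- 2 * lam j * inner (F v) (y j - v) + 2 * lam j * \<eta> * CH * DX)"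
    proof -
      have wv: "(norm (w j - v))\<^sup>2 = (1 + alpha j) * (norm (x j - v))\<^sup>2 - alpha j * (norm (prev_it x j - v))\<^sup>2 + dl j"
        using inertial_id[of "x j" "alpha j" "prev_it x j" v] by (simp add: w_def dl_def)
      show ?thesis using onestep[OF vX, of j] unfolding wv by linarith
    qed
    show "pm (Suc j) * (1 - bet j) = pm j" by (rule pmc)
    show "0 < pm j" by (rule pm_pos)
    show "(norm (prev_it x (Suc j) - v))\<^sup>2 = (norm (x j - v))\<^sup>2" by (simp add: prev_it_def)
    show "0 \<le> (norm (x j - v))\<^sup>2 \<and> (norm (x j - v))\<^sup>2 \<le> DX\<^sup>2"
      using distX[OF xX vX] by (simp add: power_mono)
    show "0 \<le> alpha j" by (rule alpha_nonneg)
    have "alpha (Suc j) \<le> (1 - bet j) * alpha j" using alpha_dec[of j] by (simp add: bet_def L_def)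
    hence "pm (Suc j) * alpha (Suc j) \<le> pm (Suc j) * ((1 - bet j) * alpha j)"
      using pm_pos[of "Suc j"] by simp
    thus "pm (Suc j) * alpha (Suc j) \<le> pm j * alpha j" using pmc[of j] by (simp add: mult.assoc[symmetric])
  qed (auto simp: prev_it_def pm_def alpha0)
  define T where "T = (\<Sum>j<k. lam j * p j)"
  have T_ge: "lam_lo * pm k \<le> T"
  proof -
    obtain m where km: "k = Suc m" using k1 by (cases k) auto
    have "lam_lo * pm k \<le> lam m * p m" unfolding p_def km
      using lam_bounds[of m] pm_pos[of "Suc m"] by (simp add: mult_right_mono)
    also have "\<dots> \<le> T" unfolding T_def km
      using lam_pos pm_pos by (intro member_le_sum) (auto simp: p_def less_imp_le)
    finally show ?thesis .
  qed
  have T_pos: "0 < T" using T_ge lam_lo_pos pm_pos[of k] by (smt (verit) mult_pos_pos)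
  have Lam_eq: "Lam = \<eta> * T" unfolding Lam_def T_def by (simp add: sum_distrib_left algebra_simps)
  have ybar_eq: "ybar = inverse T *\<^sub>R (\<Sum>j<k. (lam j * p j) *\<^sub>R y j)"
  proof -
    have "(\<Sum>j<k. (lam j * \<eta> * p j) *\<^sub>R y j) = \<eta> *\<^sub>R (\<Sum>j<k. (lam j * p j) *\<^sub>R y j)"
      by (simp add: scaleR_sum_right mult.commute mult.left_commute)
    thus ?thesis unfolding ybar_def Lam_eq using eta_pos by simp
  qed
  have sumTy: "(\<Sum>j<k. (lam j * p j) *\<^sub>R y j) = T *\<^sub>R ybar" using T_pos by (simp add: ybar_eq)
  have ybarX: "ybar \<in> X"
  proof -
    have "ybar = (\<Sum>j<k. (inverse T * (lam j * p j)) *\<^sub>R y j)"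
      unfolding ybar_eq by (simp add: scaleR_sum_right)
    also have "\<dots> \<in> X"
    proof (rule convex_sum[OF _ X_convex])
      show "(\<Sum>j<k. inverse T * (lam j * p j)) = 1"
        using T_pos by (simp add: sum_distrib_left[symmetric] T_def)
      show "\<And>i. i \<in> {..<k} \<Longrightarrow> 0 \<le> inverse T * (lam i * p i)"
        using T_pos lam_pos pm_pos by (simp add: p_def less_imp_le)
    qed (auto simp: yX)
    finally show ?thesis .
  qed
  define E where "E = DX\<^sup>2 + (\<Sum>j<k. pm j * dl j)"
  have E_nn: "0 \<le> E" unfolding E_def dl_def
    using pm_pos alpha_nonneg by (intro add_nonneg_nonneg sum_nonneg) (auto simp: less_imp_le)
  have prod_le: "(\<Prod>i<k. (1 - bet i)) \<le> (1 - betc) ^ k"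
  proof -
    have "(\<Prod>i<k. (1 - bet i)) \<le> (\<Prod>i<k. (1 - betc))"
      using bet_bounds by (intro prod_mono) (auto simp: less_imp_le)
    thus ?thesis by simp
  qed
  have bound1: "E / (2 * T) \<le> (1 - betc) ^ k / (2 * lam_lo) * E"
  proof -
    have "inverse (pm k) \<le> (1 - betc) ^ k" using prod_le by (simp add: pm_def)
    have "E / (2 * T) \<le> E / (2 * (lam_lo * pm k))"
      using E_nn T_ge lam_lo_pos pm_pos[of k] T_pos by (intro divide_left_mono mult_left_mono) auto
    also have "\<dots> = inverse (pm k) / (2 * lam_lo) * E" using pm_pos[of k] lam_lo_pos by (simp add: field_simps)
    also have "\<dots> \<le> (1 - betc) ^ k / (2 * lam_lo) * E"
      using \<open>inverse (pm k) \<le> (1 - betc) ^ k\<close> E_nn lam_lo_pos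
      by (intro mult_right_mono divide_right_mono) auto
    finally show ?thesis .
  qed
  have bound2: "\<eta> * CH * DX \<le> \<eta> * (lam_hi * CH * DX / lam_lo)"
  proof -
    have "CH * DX \<le> lam_hi * CH * DX / lam_lo"
    proof -
      have "CH * DX * lam_lo \<le> CH * DX * lam_hi"
        using lam_lo_hi CH_nn DX_nn by (intro mult_left_mono) auto
      thus ?thesis using lam_lo_pos by (simp add: field_simps)
    qed
    hence "\<eta> * (CH * DX) \<le> \<eta> * (lam_hi * CH * DX / lam_lo)" using eta_pos by (intro mult_left_mono) auto
    thus ?thesis by (simp add: mult.assoc)
  qed
  have ptw: "inner (F v) (ybar - v) \<le> (1 - betc) ^ k / (2 * lam_lo) * E + \<eta> * (lam_hi * CH * DX / lam_lo)"
    if vX: "v \<in> X" for v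
  proof -
    have s1: "(\<Sum>j<k. pm (Suc j) * (- 2 * lam j * inner (F v) (y j - v) + 2 * lam j * \<eta> * CH * DX))
       = - 2 * (\<Sum>j<k. (lam j * p j) * inner (F v) (y j - v)) + 2 * \<eta> * CH * DX * T"
    proof -
      have "(\<Sum>j<k. pm (Suc j) * (- 2 * lam j * inner (F v) (y j - v) + 2 * lam j * \<eta> * CH * DX))
        = (\<Sum>j<k. (- 2) * ((lam j * p j) * inner (F v) (y j - v)) + (2 * \<eta> * CH * DX) * (lam j * p j))"
        by (rule sum.cong) (simp_all add: p_def algebra_simps)
      also have "\<dots> = - 2 * (\<Sum>j<k. (lam j * p j) * inner (F v) (y j - v)) + 2 * \<eta> * CH * DX * T"
        by (simp only: sum.distrib sum_distrib_left[symmetric] T_def)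
      finally show ?thesis .
    qed
    have "(\<Sum>j<k. (lam j * p j) * inner (F v) (y j - v)) = inner (F v) (\<Sum>j<k. (lam j * p j) *\<^sub>R (y j - v))"
      by (simp add: inner_sum_right)
    also have "(\<Sum>j<k. (lam j * p j) *\<^sub>R (y j - v)) = (\<Sum>j<k. (lam j * p j) *\<^sub>R y j) - T *\<^sub>R v"
      by (simp add: T_def scaleR_diff_right sum_subtractf scaleR_sum_left)
    finally have s2: "(\<Sum>j<k. (lam j * p j) * inner (F v) (y j - v)) = T * inner (F v) (ybar - v)"
      unfolding sumTy by (simp add: inner_diff_right right_diff_distrib)
    have "0 \<le> E - 2 * T * inner (F v) (ybar - v) + 2 * \<eta> * CH * DX * T"
      using tel[OF vX] unfolding sum.distrib s1 s2 E_def by linarith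
    hence "2 * T * inner (F v) (ybar - v) \<le> E + 2 * T * (\<eta> * CH * DX)" by (simp add: algebra_simps)
    hence "inner (F v) (ybar - v) \<le> E / (2 * T) + \<eta> * CH * DX"
      using T_pos by (simp add: field_simps)
    thus ?thesis using bound1 bound2 by linarith
  qed
  have gap_up: "Gap ybar F X \<le> (1 - betc) ^ k / (2 * lam_lo) * E + \<eta> * (lam_hi * CH * DX / lam_lo)"
    unfolding Gap_def using X_ne ptw by (rule cSUP_least)
  have gap_lo: "0 \<le> Gap ybar F X"
    unfolding Gap_def
  proof (rule cSUP_upper2[OF bdd_aboveI2[OF ptw] ybarX])
    show "0 \<le> inner (F ybar) (ybar - ybar)" by simp
  qed
  have final: "0 \<le> Gap ybar F X \<and> Gap ybar F X \<le> (1 - betc) ^ k / (2 * lam_lo) * (DX\<^sup>2 + (\<Sum>j<k. pm j * dl j))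
                         + \<eta> * (lam_hi * CH * DX / lam_lo)"
    using gap_up gap_lo by (simp add: E_def)
  show "(let L = LF + \<eta> * LH;
         bet = (\<lambda>i. inverse (1 / (1 - (lam i)\<^sup>2 * L\<^sup>2) + 1 / (2 * lam i * \<eta> * \<mu>)));
         pm = (\<lambda>j. inverse (\<Prod>i<j. (1 - bet i)));
         p = (\<lambda>j. pm (Suc j));
         \<delta> = (\<lambda>j. alpha j * (1 + alpha j) * (norm (x j - prev_it x j))\<^sup>2);
         Lam = (\<Sum>j<k. lam j * \<eta> * p j);
         ybar = inverse Lam *\<^sub>R (\<Sum>j<k. (lam j * \<eta> * p j) *\<^sub>R y j);
         betc = inverse (1 / (1 - lam_hi\<^sup>2 * L\<^sup>2) + 1 / (2 * lam_lo * \<eta> * \<mu>));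
         DX = diameter X;
         CH = (SUP z\<in>X. norm (H z))
     in 0 \<le> Gap ybar F X \<and>
        Gap ybar F X \<le> (1 - betc) ^ k / (2 * lam_lo) * (DX\<^sup>2 + (\<Sum>j<k. pm j * \<delta> j))
                         + \<eta> * (lam_hi * CH * DX / lam_lo))"
    using final unfolding Let_def L_def bet_def pm_def p_def dl_def Lam_def ybar_def betc_def DX_def CH_def .
qed

end
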